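(* Fix $a\in\mathbb R$, $b>0$, $c>0$ and a mean $M_1$. Consider the two-player Bayesian contest with efforts restricted to $[0,\infty)$ in which cost types are i.i.d. draws from a distribution $F$ with support $[\alpha,\beta]\subset(0,c)$, mean $M_1$ and variance $\sigma_\theta^2>0$, and a type-$\theta$ player choosing $\tilde x$ against opponent strategy $x(\cdot)$ receives $\int[P(\tilde x,x(\theta'))-\theta\tilde x]\,dF(\theta')$ with $P(x,y)=\tfrac12+(x-y)\bigl(c-b(x+y)+axy\bigr)$. Restrict attention to priors $F$ for which the contest is fully active, meaning that the unique symmetric Bayesian Nash equilibrium $x_F$ of the affine relaxation (actions in $\mathbb R$; for $a=0$ it is $x_F(\theta)=\frac{c-\theta}{2b}$) is nonnegative on $[\alpha,\beta]$, so that it is an equilibrium with nonnegative efforts. Then, among such fully active priors with mean $M_1$, expected equilibrium effort $E_F[x_F(\theta)]$ is decreasing in the type variance $\sigma_\theta^2$ if $a>0$ (suppression), increasing in $\sigma_\theta^2$ if $a<0$ (empowerment), and independent of $\sigma_\theta^2$ if $a=0$.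
   Context: The affine relaxation is the same Bayesian contest with actions allowed in all of $\mathbb R$ and the raw (untruncated) $P$. For $a\neq0$ its unique symmetric equilibrium is affine in type and its expected effort depends on $F$ only through its mean and variance. *)

theory Defs
  imports "HOL-Probability.Probability"
begin

definition contest_P :: "real \<Rightarrow> real \<Rightarrow> real \<Rightarrow> real \<Rightarrow> real \<Rightarrow> real" where
  "contest_P a b c x y = 1/2 + (x - y) * (c - b * (x + y) + a * x * y)"

definition measure_support :: "real measure \<Rightarrow> real set" where
  "measure_support F = {t. \<forall>e>0. emeasure F (ball t e) > 0}"

definition admissible_prior :: "real \<Rightarrow> real \<Rightarrow> real measure \<Rightarrow> real \<Rightarrow> bool" where
  "admissible_prior c M1 F s2 \<longleftrightarrow>
     prob_space F \<and> sets F = sets borel \<and>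
     (\<exists>\<alpha> \<beta>. 0 < \<alpha> \<and> \<alpha> \<le> \<beta> \<and> \<beta> < c \<and> measure_support F = {\<alpha>..\<beta>}) \<and>
     (\<integral>t. t \<partial>F) = M1 \<and> (\<integral>t. (t - M1)^2 \<partial>F) = s2 \<and> s2 > 0"

definition exp_payoff :: "real \<Rightarrow> real \<Rightarrow> real \<Rightarrow> real measure \<Rightarrow> (real \<Rightarrow> real) \<Rightarrow> real \<Rightarrow> real \<Rightarrow> real" where
  "exp_payoff a b c F x \<theta> y = (\<integral>t. contest_P a b c y (x t) \<partial>F) - \<theta> * y"

definition relaxed_sym_BNE :: "real \<Rightarrow> real \<Rightarrow> real \<Rightarrow> real measure \<Rightarrow> (real \<Rightarrow> real) \<Rightarrow> bool" where
  "relaxed_sym_BNE a b c F x \<longleftrightarrow>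
     x \<in> borel_measurable F \<and> integrable F x \<and> integrable F (\<lambda>t. (x t)^2) \<and>
     (\<forall>\<theta>\<in>measure_support F. \<forall>y::real. exp_payoff a b c F x \<theta> y \<le> exp_payoff a b c F x \<theta> (x \<theta>))"

definition fully_active :: "real measure \<Rightarrow> (real \<Rightarrow> real) \<Rightarrow> bool" where
  "fully_active F x \<longleftrightarrow> (\<forall>\<theta>\<in>measure_support F. 0 \<le> x \<theta>)"

end

theory Submission
  imports Defs
begin

lemma AE_support:
  assumes sF: "sets F = sets borel"
  shows "AE t in F. t \<in> measure_support F"
proof -
  define FF where "FF = {ball t e | t e. e > 0 \<and> emeasure F (ball t e) = 0}"
  have "open S" if "S \<in> FF" for S using that by (auto simp: FF_def)
  then obtain GG where G: "GG \<subseteq> FF" "countable GG" "\<Union>GG = \<Union>FF" using Lindelof by metis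
  have "(\<Union>S\<in>GG. S) \<in> null_sets F"
  proof (rule null_sets_UN'[OF G(2)])
    fix S assume "S \<in> GG"
    then have "S \<in> FF" using G(1) by auto
    then obtain t e where "S = ball t e" "emeasure F (ball t e) = 0" by (auto simp: FF_def)
    moreover have "ball t e \<in> sets F" using sF by simp
    ultimately show "S \<in> null_sets F" by auto
  qed
  then have "AE t in F. t \<notin> (\<Union>S\<in>GG. S)" by (rule AE_not_in)
  then have "AE t in F. t \<notin> \<Union>GG" by simp
  then show ?thesis
  proof (rule eventually_mono)
    fix t assume "t \<notin> \<Union>GG"
    then have nt: "t \<notin> \<Union>FF" using G(3) by auto
    show "t \<in> measure_support F"
    proof (rule ccontr)
      assume "t \<notin> measure_support F"
      then obtain e where "e > 0" "\<not> emeasure F (ball t e) > 0" by (auto simp: measure_support_def)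
      then have "ball t e \<in> FF" by (auto simp: FF_def)
      then show False using nt \<open>e > 0\<close> by auto
    qed
  qed
qed

lemma quad_max:
  fixes p k :: real
  assumes "\<And>t. t * p - k * t^2 \<le> 0"
  shows "k \<ge> 0 \<and> p = 0"
proof -
  have 1: "p - k \<le> 0" using assms[of 1] by simp
  have 2: "- p - k \<le> 0" using assms[of "-1"] by simp
  have k: "k \<ge> 0" using 1 2 by linarith
  have "p = 0"
  proof (cases "k = 0")
    case True then show ?thesis using 1 2 by simp
  next
    case False
    then have kp: "k > 0" using k by simp
    have "(p/(2*k)) * p - k * (p/(2*k))^2 \<le> 0" using assms by blast
    moreover have "(p/(2*k)) * p - k * (p/(2*k))^2 = p^2/(4*k)"
      using kp by (simp add: field_simps power2_eq_square)
    ultimately have "p^2/(4*k) \<le> 0" by simp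
    then have "p^2 \<le> 0" using kp by (simp add: divide_le_0_iff)
    then show ?thesis by simp
  qed
  then show ?thesis using k by simp
qed

lemma payoff_formula:
  assumes "prob_space F" and ix: "integrable F x" and iq: "integrable F (\<lambda>t. (x t)^2)"
  shows "exp_payoff a b c F x \<theta> y =
     (1/2 + c*y - b*y^2) + (a*y^2 - c) * (\<integral>t. x t \<partial>F) + (b - a*y) * (\<integral>t. (x t)^2 \<partial>F) - \<theta>*y"
proof -
  interpret prob_space F by fact
  have eq: "(\<lambda>t. contest_P a b c y (x t)) =
     (\<lambda>t. (1/2 + c*y - b*y^2) + ((a*y^2 - c) * x t + (b - a*y) * (x t)^2))"
    by (rule ext) (simp add: contest_P_def algebra_simps power2_eq_square)
  have "(\<integral>t. contest_P a b c y (x t) \<partial>F) =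
     (1/2 + c*y - b*y^2) + ((a*y^2 - c) * (\<integral>t. x t \<partial>F) + (b - a*y) * (\<integral>t. (x t)^2 \<partial>F))"
    unfolding eq
    using ix iq by (simp add: integral_add integral_mult_right prob_space)
  then show ?thesis by (simp add: exp_payoff_def)
qed

lemma bne_char:
  fixes a b c M1 sv m :: real and F :: "real measure" and x :: "real \<Rightarrow> real"
  assumes adm: "admissible_prior c M1 F sv" and bne: "relaxed_sym_BNE a b c F x"
    and mdef: "m = (\<integral>t. x t \<partial>F)"
  shows "b - a * m > 0 \<and> c - M1 = 2*b*m - a*m^2 + a * sv/(4*(b - a*m)^2)"
proof -
  from adm obtain \<alpha> \<beta> where ps: "prob_space F" and sF: "sets F = sets borel"
    and ab: "\<alpha> \<le> \<beta>" "measure_support F = {\<alpha>..\<beta>}"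
    and M1: "(\<integral>t. t \<partial>F) = M1" and S: "(\<integral>t. (t - M1)^2 \<partial>F) = sv" and sp: "sv > 0"
    unfolding admissible_prior_def by blast
  interpret prob_space F by fact
  from bne have ix: "integrable F x" and iq: "integrable F (\<lambda>t. (x t)^2)"
    and br: "\<And>\<theta> y. \<theta> \<in> measure_support F \<Longrightarrow> exp_payoff a b c F x \<theta> y \<le> exp_payoff a b c F x \<theta> (x \<theta>)"
    unfolding relaxed_sym_BNE_def by blast+
  note m_def = mdef
  define q where "q = (\<integral>t. (x t)^2 \<partial>F)"
  define k where "k = b - a*m"
  define A where "A = c - a*q"
  have U: "exp_payoff a b c F x \<theta> y = (1/2 + c*y - b*y^2) + (a*y^2 - c) * m + (b - a*y) * q - \<theta>*y"
    for \<theta> y using payoff_formula[OF ps ix iq] unfolding m_def q_def by simp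
  have key: "k \<ge> 0 \<and> \<theta> = A - 2*k*x \<theta>" if th: "\<theta> \<in> measure_support F" for \<theta>
  proof -
    let ?z = "x \<theta>"
    have "t * (A - \<theta> - 2*k*?z) - k * t^2 \<le> 0" for t
    proof -
      have "exp_payoff a b c F x \<theta> (?z + t) \<le> exp_payoff a b c F x \<theta> ?z" using br th by blast
      moreover have "exp_payoff a b c F x \<theta> (?z + t) - exp_payoff a b c F x \<theta> ?z =
          t * (A - \<theta> - 2*k*?z) - k * t^2"
        unfolding U A_def k_def by (simp add: algebra_simps power2_eq_square)
      ultimately show ?thesis by linarith
    qed
    from quad_max[OF this] show ?thesis by auto
  qed
  have "\<alpha> \<in> measure_support F" using ab by simp
  then have k0: "k \<ge> 0" using key by blast
  have AEt: "AE t in F. t = A - 2*k*x t"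
    using AE_support[OF sF] by (rule eventually_mono) (use key in blast)
  have mb: "measurable F borel = measurable borel borel" by (rule measurable_cong_sets[OF sF refl])
  have mt: "(\<lambda>t. t) \<in> borel_measurable F" unfolding mb by simp
  have mx: "x \<in> borel_measurable F" using ix by simp
  have "M1 = (\<integral>t. A - 2*k*x t \<partial>F)"
    using M1[symmetric] integral_cong_AE[of "\<lambda>t. t" F "\<lambda>t. A - 2*k*x t"] AEt mt mx by auto
  also have "\<dots> = A - 2*k*m" using ix by (simp add: m_def prob_space)
  finally have M1e: "M1 = A - 2*k*m" .
  have "sv = (\<integral>t. (A - 2*k*x t - M1)^2 \<partial>F)"
  proof -
    have "AE t in F. (t - M1)^2 = (A - 2*k*x t - M1)^2" using AEt by (rule eventually_mono) simp
    then have "(\<integral>t. (t - M1)^2 \<partial>F) = (\<integral>t. (A - 2*k*x t - M1)^2 \<partial>F)"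
      using mt mx by (intro integral_cong_AE) auto
    then show ?thesis using S by simp
  qed
  also have "\<dots> = (\<integral>t. 4*k^2*m^2 + ((-8*k^2*m) * x t + (4*k^2) * (x t)^2) \<partial>F)"
    by (rule Bochner_Integration.integral_cong) (auto simp: M1e power2_eq_square algebra_simps)
  also have "\<dots> = 4*k^2*m^2 + ((-8*k^2*m) * m + (4*k^2) * q)"
    using ix iq by (simp add: integral_add prob_space m_def q_def)
  finally have se: "sv = 4*k^2*(q - m^2)" by (simp add: algebra_simps power2_eq_square)
  have kp: "k > 0"
  proof (rule ccontr)
    assume "\<not> k > 0" then have "k = 0" using k0 by simp
    then show False using se sp by simp
  qed
  have qe: "q = m^2 + sv/(4*k^2)" using se kp by (simp add: field_simps)
  have "c - M1 = 2*b*m - a*m^2 + a * sv/(4*k^2)"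
    using M1e qe unfolding A_def k_def by (simp add: algebra_simps power2_eq_square)
  then show ?thesis using kp unfolding k_def by simp
qed

theorem theorem4:
  fixes a b c M1 s1 s2 :: real and F1 F2 :: "real measure" and x1 x2 :: "real \<Rightarrow> real"
  assumes "b > 0" and "c > 0"
    and "admissible_prior c M1 F1 s1" and "admissible_prior c M1 F2 s2"
    and "relaxed_sym_BNE a b c F1 x1" and "relaxed_sym_BNE a b c F2 x2"
    and "fully_active F1 x1" and "fully_active F2 x2"
  shows "(a > 0 \<and> s1 < s2 \<longrightarrow> (\<integral>t. x2 t \<partial>F2) < (\<integral>t. x1 t \<partial>F1)) \<and>
         (a < 0 \<and> s1 < s2 \<longrightarrow> (\<integral>t. x1 t \<partial>F1) < (\<integral>t. x2 t \<partial>F2)) \<and>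
         (a = 0 \<longrightarrow> (\<integral>t. x1 t \<partial>F1) = (\<integral>t. x2 t \<partial>F2))"
proof -
  define u1 where "u1 = (\<integral>t. x1 t \<partial>F1)"
  define u2 where "u2 = (\<integral>t. x2 t \<partial>F2)"
  define k1 where "k1 = b - a*u1"
  define k2 where "k2 = b - a*u2"
  have s1p: "s1 > 0" using assms(3) by (simp add: admissible_prior_def)
  from bne_char[OF assms(3,5) u1_def] have k1: "k1 > 0" and e1: "c - M1 = 2*b*u1 - a*u1^2 + a * s1/(4*k1^2)"
    unfolding u1_def k1_def by auto
  from bne_char[OF assms(4,6) u2_def] have k2: "k2 > 0" and e2: "c - M1 = 2*b*u2 - a*u2^2 + a * s2/(4*k2^2)"
    unfolding u2_def k2_def by auto
  have G: "(2*b*u2 - a*u2^2) - (2*b*u1 - a*u1^2) = (u2 - u1) * (k1 + k2)"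
    unfolding k1_def k2_def by (simp add: algebra_simps power2_eq_square)
  have part1: "u2 < u1" if a: "a > 0" and s: "s1 < s2"
  proof (rule ccontr)
    assume "\<not> u2 < u1" then have le: "u1 \<le> u2" by simp
    have g: "(u2 - u1) * (k1 + k2) \<ge> 0" using le k1 k2 by simp
    have "k2 \<le> k1" unfolding k1_def k2_def using le a by (simp add: mult_left_mono)
    then have "k2^2 \<le> k1^2" using k2 by (simp add: power_mono)
    then have "s1/k1^2 \<le> s1/k2^2" using s1p k2 by (simp add: frac_le)
    also have "\<dots> < s2/k2^2" using s k2 by (simp add: divide_strict_right_mono)
    finally have "(a/4) * (s1/k1^2) < (a/4) * (s2/k2^2)" by (rule mult_strict_left_mono) (use a in auto)
    then have "a * s1/(4*k1^2) < a * s2/(4*k2^2)" by simp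
    then show False using e1 e2 G g by linarith
  qed
  have part2: "u1 < u2" if a: "a < 0" and s: "s1 < s2"
  proof (rule ccontr)
    assume "\<not> u1 < u2" then have le: "u2 \<le> u1" by simp
    have g: "(u2 - u1) * (k1 + k2) \<le> 0" using le k1 k2 by (simp add: mult_nonpos_nonneg)
    have "k2 \<le> k1" unfolding k1_def k2_def using le a by (simp add: mult_left_mono_neg)
    then have "k2^2 \<le> k1^2" using k2 by (simp add: power_mono)
    then have "s1/k1^2 \<le> s1/k2^2" using s1p k2 by (simp add: frac_le)
    also have "\<dots> < s2/k2^2" using s k2 by (simp add: divide_strict_right_mono)
    finally have "(a/4) * (s2/k2^2) < (a/4) * (s1/k1^2)" by (rule mult_strict_left_mono_neg) (use a in auto)
    then have "a * s2/(4*k2^2) < a * s1/(4*k1^2)" by simp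
    then show False using e1 e2 G g by linarith
  qed
  have part3: "u1 = u2" if a: "a = 0"
    using e1 e2 a \<open>b > 0\<close> by simp
  show ?thesis using part1 part2 part3 unfolding u1_def u2_def by blast
qed

end
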